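(* Let $\mathcal X$ be finite with $N=|\mathcal X|\ge2$, $c\in(0,1/N]$, $\varepsilon\ge0$, and let $K\in\mathcal M(\varepsilon,c)$. Then for all $P_X,Q_X\in\mathcal Q_{\mathcal X}(c)$ with $\mathrm{TV}(P_X\|Q_X)\le\delta$, $$D(K\circ P_X\|K\circ Q_X)\le\Xi(\varepsilon,c)\,\log\big((1-Nc)e^\varepsilon+1\big)\,\delta,$$ where $\Xi(\varepsilon,c)=\min\left\{\frac{e^\varepsilon-1}{e^\varepsilon(1-Nc)+1},1\right\}$.
   Context: $D(P\|Q)=\sum_y P(y)\log\frac{P(y)}{Q(y)}$ is relative entropy (natural log) and $\mathrm{TV}(P\|Q)=\frac12\sum|P-Q|$. A kernel $K$ is a row-stochastic matrix with entries $K_{Y|X=x}(y)$, $(K\circ P_X)(y)=\sum_xK_{Y|X=x}(y)P_X(x)$. PML: $\ell_{K\times P_X}(X\to y)=\log\frac{\max_x K_{Y|X=x}(y)}{(K\circ P_X)(y)}$ for full-support $P_X$ and $(K\circ P_X)(y)>0$. $\mathcal Q_{\mathcal X}(c)=\{P_X:\min_xP_X(x)\ge c\}$; $C(K,\mathcal P)=\sup_{P_X\in\mathcal P}\sup_{y:(K\circ P_X)(y)>0}\ell_{K\times P_X}(X\to y)$; $\mathcal M(\varepsilon,c)$ is the set of kernels from $\mathcal X$ to a finite output set with $C(K,\mathcal Q_{\mathcal X}(c))\le\varepsilon$. *)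

theory Defs
  imports Complex_Main
begin

definition is_dist :: "'a set \<Rightarrow> ('a \<Rightarrow> real) \<Rightarrow> bool" where
  "is_dist X P \<longleftrightarrow> (\<forall>x\<in>X. P x \<ge> 0) \<and> (\<Sum>x\<in>X. P x) = 1"

definition is_kernel :: "'a set \<Rightarrow> 'b set \<Rightarrow> ('a \<Rightarrow> 'b \<Rightarrow> real) \<Rightarrow> bool" where
  "is_kernel X Y K \<longleftrightarrow> finite Y \<and> (\<forall>x\<in>X. is_dist Y (K x))"

definition push :: "'a set \<Rightarrow> ('a \<Rightarrow> 'b \<Rightarrow> real) \<Rightarrow> ('a \<Rightarrow> real) \<Rightarrow> 'b \<Rightarrow> real" where
  "push X K P y = (\<Sum>x\<in>X. K x y * P x)"

definition pml :: "'a set \<Rightarrow> ('a \<Rightarrow> 'b \<Rightarrow> real) \<Rightarrow> ('a \<Rightarrow> real) \<Rightarrow> 'b \<Rightarrow> real" where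
  "pml X K P y = ln ((MAX x\<in>X. K x y) / push X K P y)"

definition Qset :: "'a set \<Rightarrow> real \<Rightarrow> ('a \<Rightarrow> real) set" where
  "Qset X c = {P. is_dist X P \<and> (\<forall>x\<in>X. P x \<ge> c)}"

text \<open>K in M(eps,c): K is a kernel into finite Y and
  C(K,Q_X(c)) = sup over P in Q_X(c) and y with (K o P)(y) > 0 of the PML is at most eps
  (the supremum condition written out pointwise).\<close>
definition in_M :: "'a set \<Rightarrow> 'b set \<Rightarrow> real \<Rightarrow> real \<Rightarrow> ('a \<Rightarrow> 'b \<Rightarrow> real) \<Rightarrow> bool" where
  "in_M X Y eps c K \<longleftrightarrow> is_kernel X Y K \<and>
     (\<forall>P\<in>Qset X c. \<forall>y\<in>Y. push X K P y > 0 \<longrightarrow> pml X K P y \<le> eps)"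

text \<open>Relative entropy (natural log), with the convention 0 log(0/q) = 0.\<close>
definition KL :: "'b set \<Rightarrow> ('b \<Rightarrow> real) \<Rightarrow> ('b \<Rightarrow> real) \<Rightarrow> real" where
  "KL Y P Q = (\<Sum>y\<in>{y\<in>Y. P y > 0}. P y * ln (P y / Q y))"

definition TV :: "'a set \<Rightarrow> ('a \<Rightarrow> real) \<Rightarrow> ('a \<Rightarrow> real) \<Rightarrow> real" where
  "TV X P Q = (1/2) * (\<Sum>x\<in>X. \<bar>P x - Q x\<bar>)"

definition Xi :: "nat \<Rightarrow> real \<Rightarrow> real \<Rightarrow> real" where
  "Xi N eps c = min ((exp eps - 1) / (exp eps * (1 - real N * c) + 1)) 1"

end

theory Submission
  imports Defs "HOL-Analysis.Analysis"
begin

lemma ineqA: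
  fixes r L :: real assumes "1 \<le> r" "r \<le> L"
  shows "r * ln r \<le> (r - 1) * (L * ln L / (L - 1))"
proof (cases "r = L")
  case True
  then show ?thesis using assms by (cases "L = 1") auto
next
  case False
  hence "L > 1" "L - 1 > 0" using assms by auto
  have cv: "convex_on {1..L} (\<lambda>x. x * ln x)"
  proof (rule convex_on_realI[where f'="\<lambda>x. ln x + 1"])
    show "connected {1..L}" by simp
    fix x assume "x \<in> {1..L}"
    then show "((\<lambda>x. x * ln x) has_real_derivative ln x + 1) (at x)"
      by (auto intro!: derivative_eq_intros)
  next
    fix x y :: real assume "x \<in> {1..L}" "y \<in> {1..L}" "x \<le> y"
    then show "ln x + 1 \<le> ln y + 1" by auto
  qed
  have "r * ln r \<le> (L * ln L - 1 * ln 1) / (L - 1) * (r - 1) + 1 * ln 1"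
    using convex_onD_Icc'[OF cv, of r] assms by auto
  then show ?thesis by (simp add: field_simps)
qed

lemma ineqB:
  fixes s L :: real assumes "1 \<le> s" "s \<le> L"
  shows "(s - 1) * (ln L / (L - 1)) \<le> ln s"
proof (cases "s = L")
  case True
  then show ?thesis using assms by (cases "L = 1") auto
next
  case False
  hence "L > 1" "L - 1 > 0" using assms by auto
  have cv: "convex_on {1..L} (\<lambda>x. - ln x)"
  proof (rule convex_on_realI[where f'="\<lambda>x. - inverse x"])
    show "connected {1..L}" by simp
    fix x assume "x \<in> {1..L}"
    then show "((\<lambda>x. - ln x) has_real_derivative - inverse x) (at x)"
      by (auto intro!: derivative_eq_intros simp: field_simps)
  next
    fix x y :: real assume "x \<in> {1..L}" "y \<in> {1..L}" "x \<le> y"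
    then show "- inverse x \<le> - inverse y" by (auto simp: field_simps)
  qed
  have "- ln s \<le> (- ln L - - ln 1) / (L - 1) * (s - 1) + - ln 1"
    using convex_onD_Icc'[OF cv, of s] assms by auto
  then show ?thesis by (simp add: field_simps)
qed

lemma term_bound:
  fixes p q L :: real assumes "0 < p" "0 < q" "p \<le> L * q" "q \<le> L * p"
  shows "p * ln (p / q) \<le> (p - q) + (L * ln L / (L - 1) - 1) * max (p - q) 0
            + (1 - ln L / (L - 1)) * max (q - p) 0"
proof (cases "p \<ge> q")
  case True
  define Z where "Z = L * ln L / (L - 1)"
  have "p / q \<le> L" "1 \<le> p / q" using assms True by (auto simp: field_simps)
  from ineqA[OF this(2,1)]
  have h: "p / q * ln (p / q) \<le> (p / q - 1) * Z" unfolding Z_def .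
  have "p * ln (p / q) = q * (p / q * ln (p / q))" using assms by simp
  also have "\<dots> \<le> q * ((p / q - 1) * Z)"
    using assms h by (intro mult_left_mono) auto
  also have "\<dots> = (p - q) * Z" using assms by (simp add: field_simps)
  finally have "p * ln (p / q) \<le> (p - q) * Z" .
  then show ?thesis using True unfolding Z_def by (simp add: algebra_simps)
next
  case False
  define Z where "Z = ln L / (L - 1)"
  have "q / p \<le> L" "1 \<le> q / p" using assms False by (auto simp: field_simps)
  from ineqB[OF this(2,1)]
  have h: "(q / p - 1) * Z \<le> ln (q / p)" unfolding Z_def .
  have "(q - p) * Z = p * ((q / p - 1) * Z)" using assms by (simp add: field_simps)
  also have "\<dots> \<le> p * ln (q / p)"
    using assms h by (intro mult_left_mono) auto
  finally have "(q - p) * Z \<le> p * ln (q / p)" .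
  moreover have "ln (p / q) = - ln (q / p)" using assms by (simp add: ln_div)
  ultimately show ?thesis using False unfolding Z_def by (simp add: algebra_simps)
qed

lemma kernel_facts:
  assumes "in_M X Y eps c K"
  shows "finite Y" "\<And>x y. x \<in> X \<Longrightarrow> y \<in> Y \<Longrightarrow> K x y \<ge> 0"
    "\<And>x. x \<in> X \<Longrightarrow> (\<Sum>y\<in>Y. K x y) = 1"
  using assms unfolding in_M_def is_kernel_def is_dist_def by auto

lemma Q_facts:
  assumes "R \<in> Qset X c"
  shows "\<And>x. x \<in> X \<Longrightarrow> R x \<ge> c" "(\<Sum>x\<in>X. R x) = 1"
  using assms unfolding Qset_def is_dist_def by auto

lemma push_nonneg:
  assumes "in_M X Y eps c K" "R \<in> Qset X c" "0 < c" "y \<in> Y"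
  shows "push X K R y \<ge> 0"
  unfolding push_def using kernel_facts[OF assms(1)] Q_facts[OF assms(2)] assms
  by (intro sum_nonneg mult_nonneg_nonneg) (auto intro: order.trans[of 0 c])

lemma kbound:
  assumes M: "in_M X Y eps c K" and fX: "finite X" and c: "0 < c"
    and R: "R \<in> Qset X c" and y: "y \<in> Y" and x: "x \<in> X"
  shows "K x y \<le> exp eps * push X K R y"
proof -
  note kf = kernel_facts[OF M]
  note rf = Q_facts[OF R]
  have pn: "push X K R y \<ge> 0" by (rule push_nonneg[OF M R c y])
  show ?thesis
  proof (cases "push X K R y > 0")
    case True
    have pml: "pml X K R y \<le> eps" using M R y True unfolding in_M_def by auto
    have mx: "K x y \<le> (MAX x\<in>X. K x y)" using fX x by (intro Max_ge) auto
    show ?thesis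
    proof (cases "(MAX x\<in>X. K x y) > 0")
      case False
      then show ?thesis using mx pn by (smt (verit) exp_gt_zero mult_nonneg_nonneg)
    next
      case mpos: True
      have "ln ((MAX x\<in>X. K x y) / push X K R y) \<le> eps" using pml unfolding pml_def .
      hence "(MAX x\<in>X. K x y) / push X K R y \<le> exp eps"
        using mpos True by (metis divide_pos_pos exp_le_cancel_iff exp_ln)
      hence "(MAX x\<in>X. K x y) \<le> exp eps * push X K R y"
        using True by (simp add: divide_le_eq)
      then show ?thesis using mx by linarith
    qed
  next
    case False
    hence z: "push X K R y = 0" using pn by auto
    have nn: "\<forall>z\<in>X. 0 \<le> K z y * R z"
      using kf(2)[OF _ y] rf(1) c by (auto intro!: mult_nonneg_nonneg intro: order.trans[of 0 c])
    have "K x y * R x = 0" using z nn x fX unfolding push_def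
      by (simp add: sum_nonneg_eq_0_iff)
    moreover have "R x > 0" using rf(1)[OF x] c by auto
    ultimately have "K x y = 0" by simp
    then show ?thesis using z by simp
  qed
qed

lemma setbound:
  assumes M: "in_M X Y eps c K" and fX: "finite X" and c: "0 < c"
    and R: "R \<in> Qset X c" and E: "E \<subseteq> Y" and x: "x \<in> X"
  shows "(\<Sum>y\<in>E. K x y) \<le> exp eps * (\<Sum>z\<in>X. R z * (\<Sum>y\<in>E. K z y))"
proof -
  have fE: "finite E" using kernel_facts(1)[OF M] E by (rule finite_subset[rotated])
  have "(\<Sum>y\<in>E. K x y) \<le> (\<Sum>y\<in>E. exp eps * push X K R y)"
    using kbound[OF M fX c R _ x] E by (intro sum_mono) auto
  also have "\<dots> = exp eps * (\<Sum>y\<in>E. \<Sum>z\<in>X. K z y * R z)"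
    unfolding push_def by (simp add: sum_distrib_left)
  also have "(\<Sum>y\<in>E. \<Sum>z\<in>X. K z y * R z) = (\<Sum>z\<in>X. R z * (\<Sum>y\<in>E. K z y))"
    by (subst sum.swap) (simp add: sum_distrib_left mult.commute)
  finally show ?thesis .
qed

lemma ratio:
  assumes M: "in_M X Y eps c K" and fX: "finite X" and c: "0 < c"
    and N: "N = card X" and cN: "real N * c \<le> 1"
    and P: "P \<in> Qset X c" and Q: "Q \<in> Qset X c" and y: "y \<in> Y"
  shows "push X K P y \<le> ((1 - real N * c) * exp eps + 1) * push X K Q y"
proof -
  note kf = kernel_facts[OF M]
  have "push X K P y = (\<Sum>x\<in>X. K x y * c) + (\<Sum>x\<in>X. K x y * (P x - c))"
    unfolding push_def by (simp add: sum.distrib[symmetric] algebra_simps)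
  also have "(\<Sum>x\<in>X. K x y * c) \<le> push X K Q y"
    unfolding push_def using kf(2)[OF _ y] Q_facts(1)[OF Q]
    by (intro sum_mono mult_left_mono) auto
  also have "(\<Sum>x\<in>X. K x y * (P x - c)) \<le> (\<Sum>x\<in>X. exp eps * push X K Q y * (P x - c))"
    using kbound[OF M fX c Q y] Q_facts(1)[OF P]
    by (intro sum_mono mult_right_mono) auto
  also have "\<dots> = exp eps * push X K Q y * (1 - real N * c)"
    using Q_facts(2)[OF P] N by (simp add: sum_distrib_left[symmetric] sum_subtractf)
  finally show ?thesis by (simp add: algebra_simps)
qed


lemma pointR:
  assumes fX: "finite X" and c: "0 < c" and N: "N = card X" and cN: "real N * c \<le> 1"
    and x: "x \<in> X"
  shows "(\<lambda>z. c + (if z = x then 1 - real N * c else 0)) \<in> Qset X c"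
  using assms unfolding Qset_def is_dist_def by (auto simp: sum.distrib)

lemma diffbound:
  assumes M: "in_M X Y eps c K" and fX: "finite X" and c: "0 < c"
    and N: "N = card X" and cN: "real N * c \<le> 1"
    and E: "E \<subseteq> Y" and x: "x \<in> X" and x': "x' \<in> X"
  shows "((\<Sum>y\<in>E. K x y) - (\<Sum>y\<in>E. K x' y)) * ((1 - real N * c) * exp eps + 1) \<le> exp eps - 1"
proof -
  note kf = kernel_facts[OF M]
  define f where "f z = (\<Sum>y\<in>E. K z y)" for z
  define g where "g z = (\<Sum>y\<in>Y - E. K z y)" for z
  define a where "a = 1 - real N * c"
  define F where "F = (\<Sum>z\<in>X. f z)"
  have g: "g z = 1 - f z" if "z \<in> X" for z
    using kf(3)[OF that] kf(1) E unfolding g_def f_def by (simp add: sum_diff)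
  have sumR: "(\<Sum>z\<in>X. (c + (if z = w then a else 0)) * h z) = c * (\<Sum>z\<in>X. h z) + a * h w"
    if "w \<in> X" for w and h :: "'a \<Rightarrow> real"
  proof -
    have "(\<Sum>z\<in>X. (c + (if z = w then a else 0)) * h z) = (\<Sum>z\<in>X. c * h z + (if z = w then a * h z else 0))"
      by (intro sum.cong) (auto simp: algebra_simps)
    also have "\<dots> = c * (\<Sum>z\<in>X. h z) + a * h w"
      using that fX by (simp add: sum.distrib sum_distrib_left)
    finally show ?thesis .
  qed
  have "f x \<le> exp eps * (\<Sum>z\<in>X. (c + (if z = x' then a else 0)) * f z)"
    using setbound[OF M fX c pointR[OF fX c N cN x'] E x] unfolding f_def a_def .
  hence h1: "f x \<le> exp eps * (c * F + a * f x')" using sumR[OF x'] unfolding F_def by simp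
  have "g x' \<le> exp eps * (\<Sum>z\<in>X. (c + (if z = x then a else 0)) * g z)"
    using setbound[OF M fX c pointR[OF fX c N cN x] _ x'] unfolding g_def a_def by auto
  hence "g x' \<le> exp eps * (c * (\<Sum>z\<in>X. g z) + a * g x)" using sumR[OF x] by simp
  moreover have "(\<Sum>z\<in>X. g z) = real N - F"
    using g N unfolding F_def by (simp add: sum_subtractf)
  ultimately have h2: "1 - f x' \<le> exp eps * (c * (real N - F) + a * (1 - f x))"
    using g x x' by simp
  have "exp eps * (c * F + a * f x') + exp eps * (c * (real N - F) + a * (1 - f x))
      = exp eps * (c * real N + a) - exp eps * a * (f x - f x')"
    by (simp add: algebra_simps)
  moreover have "exp eps * (c * real N + a) = exp eps" unfolding a_def by simp
  ultimately have "f x + (1 - f x') \<le> exp eps - exp eps * a * (f x - f x')"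
    using h1 h2 by linarith
  hence "(f x - f x') * (a * exp eps + 1) \<le> exp eps - 1" by (simp add: algebra_simps)
  then show ?thesis unfolding f_def a_def .
qed


lemma push_sum:
  assumes M: "in_M X Y eps c K" and R: "R \<in> Qset X c"
  shows "(\<Sum>y\<in>Y. push X K R y) = 1"
proof -
  have "(\<Sum>y\<in>Y. push X K R y) = (\<Sum>x\<in>X. R x * (\<Sum>y\<in>Y. K x y))"
    unfolding push_def by (subst sum.swap) (simp add: sum_distrib_left mult.commute)
  also have "\<dots> = (\<Sum>x\<in>X. R x)" using kernel_facts(3)[OF M] by simp
  finally show ?thesis using Q_facts(2)[OF R] by simp
qed

lemma pos_part_sum:
  fixes u v :: "'c \<Rightarrow> real"
  assumes "finite A" "(\<Sum>x\<in>A. u x) = (\<Sum>x\<in>A. v x)"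
  shows "(\<Sum>x\<in>A. \<bar>u x - v x\<bar>) = 2 * (\<Sum>x\<in>A. max (u x - v x) 0)"
    "(\<Sum>x\<in>A. max (v x - u x) 0) = (\<Sum>x\<in>A. max (u x - v x) 0)"
proof -
  have z: "(\<Sum>x\<in>A. u x - v x) = 0" using assms by (simp add: sum_subtractf)
  have "(\<Sum>x\<in>A. \<bar>u x - v x\<bar>) = (\<Sum>x\<in>A. 2 * max (u x - v x) 0 - (u x - v x))"
    by (intro sum.cong refl) (auto simp: max_def abs_if)
  also have "\<dots> = 2 * (\<Sum>x\<in>A. max (u x - v x) 0)"
    using z by (simp add: sum_subtractf sum_distrib_left)
  finally show "(\<Sum>x\<in>A. \<bar>u x - v x\<bar>) = 2 * (\<Sum>x\<in>A. max (u x - v x) 0)" .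
  have "(\<Sum>x\<in>A. max (v x - u x) 0) = (\<Sum>x\<in>A. max (u x - v x) 0 - (u x - v x))"
    by (intro sum.cong) auto
  also have "\<dots> = (\<Sum>x\<in>A. max (u x - v x) 0)" using z by (simp add: sum_subtractf)
  finally show "(\<Sum>x\<in>A. max (v x - u x) 0) = (\<Sum>x\<in>A. max (u x - v x) 0)" .
qed

theorem corollary1:
  fixes X :: "'a set" and Y :: "'b set" and K :: "'a \<Rightarrow> 'b \<Rightarrow> real"
    and c eps \<delta> :: real and N :: nat and P Q :: "'a \<Rightarrow> real"
  assumes "finite X" and "N = card X" and "N \<ge> 2"
    and "0 < c" and "c \<le> 1 / real N" and "eps \<ge> 0"
    and "in_M X Y eps c K"
    and "P \<in> Qset X c" and "Q \<in> Qset X c"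
    and "TV X P Q \<le> \<delta>"
  shows "KL Y (push X K P) (push X K Q)
           \<le> Xi N eps c * ln ((1 - real N * c) * exp eps + 1) * \<delta>"
proof -
  note fX = assms(1) and NX = assms(2) and c = assms(4) and M = assms(7)
    and PQ = assms(8) and QQ = assms(9)
  note kf = kernel_facts[OF M]
  have cN: "real N * c \<le> 1" using assms(3,5) by (simp add: le_divide_eq mult.commute)
  define L where "L = (1 - real N * c) * exp eps + 1"
  define W where "W = Xi N eps c"
  define p where "p = push X K P"
  define q where "q = push X K Q"
  have L1: "L \<ge> 1" unfolding L_def using cN by simp
  have pn: "p y \<ge> 0" if "y \<in> Y" for y unfolding p_def by (rule push_nonneg[OF M PQ c that])
  have qn: "q y \<ge> 0" if "y \<in> Y" for y unfolding q_def by (rule push_nonneg[OF M QQ c that])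
  have rpq: "p y \<le> L * q y" if "y \<in> Y" for y
    unfolding p_def q_def L_def by (rule ratio[OF M fX c NX cN PQ QQ that])
  have rqp: "q y \<le> L * p y" if "y \<in> Y" for y
    unfolding p_def q_def L_def by (rule ratio[OF M fX c NX cN QQ PQ that])
  have sp: "(\<Sum>y\<in>Y. p y) = 1" unfolding p_def by (rule push_sum[OF M PQ])
  have sq: "(\<Sum>y\<in>Y. q y) = 1" unfolding q_def by (rule push_sum[OF M QQ])
  define E where "E = {y\<in>Y. p y > q y}"
  define T where "T = (\<Sum>y\<in>E. p y - q y)"
  define \<alpha> where "\<alpha> = L * ln L / (L - 1) - 1"
  define \<beta> where "\<beta> = 1 - ln L / (L - 1)"
  define B where "B y = (p y - q y) + \<alpha> * max (p y - q y) 0 + \<beta> * max (q y - p y) 0" for y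
  have TY: "T = (\<Sum>y\<in>Y. max (p y - q y) 0)"
    unfolding T_def E_def using kf(1) by (simp add: sum.inter_filter) (intro sum.cong refl; auto simp: max_def)
  have "KL Y p q = (\<Sum>y\<in>{y\<in>Y. p y > 0}. p y * ln (p y / q y))" unfolding KL_def ..
  also have "\<dots> \<le> (\<Sum>y\<in>{y\<in>Y. p y > 0}. B y)"
  proof (intro sum_mono)
    fix y assume y: "y \<in> {y\<in>Y. p y > 0}"
    hence "q y > 0" using rqp[of y] rpq[of y] qn[of y] by (cases "q y = 0") auto
    then show "p y * ln (p y / q y) \<le> B y" unfolding B_def \<alpha>_def \<beta>_def
      using y rpq[of y] rqp[of y] by (intro term_bound) auto
  qed
  also have "\<dots> = (\<Sum>y\<in>Y. B y)"
  proof (intro sum.mono_neutral_left)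
    show "finite Y" by (rule kf(1))
    show "{y\<in>Y. p y > 0} \<subseteq> Y" by auto
    show "\<forall>y\<in>Y - {y\<in>Y. p y > 0}. B y = 0"
    proof
      fix y assume y: "y \<in> Y - {y\<in>Y. p y > 0}"
      hence "p y = 0" using pn[of y] by auto
      moreover have "q y = 0" using rqp[of y] qn[of y] y calculation by auto
      ultimately show "B y = 0" unfolding B_def by simp
    qed
  qed
  also have "(\<Sum>y\<in>Y. B y) = (\<Sum>y\<in>Y. p y - q y) + \<alpha> * (\<Sum>y\<in>Y. max (p y - q y) 0)
      + \<beta> * (\<Sum>y\<in>Y. max (q y - p y) 0)"
    unfolding B_def by (simp add: sum.distrib sum_distrib_left)
  also have "\<dots> = (\<alpha> + \<beta>) * T"
    using pos_part_sum(2)[OF kf(1), of p q] sp sq TY by (simp add: sum_subtractf algebra_simps)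
  also have "\<alpha> + \<beta> = ln L"
  proof (cases "L = 1")
    case True then show ?thesis unfolding \<alpha>_def \<beta>_def by simp
  next
    case False
    hence d: "L - 1 \<noteq> 0" by simp
    have "\<alpha> + \<beta> = (L * ln L - ln L) / (L - 1)" unfolding \<alpha>_def \<beta>_def
      by (simp add: diff_divide_distrib)
    also have "L * ln L - ln L = ln L * (L - 1)" by (simp add: algebra_simps)
    finally show ?thesis using d by simp
  qed
  finally have KLT: "KL Y p q \<le> ln L * T" .
  define f where "f x = (\<Sum>y\<in>E. K x y)" for x
  have T2: "T = (\<Sum>x\<in>X. (P x - Q x) * f x)"
  proof -
    have "T = (\<Sum>y\<in>E. \<Sum>x\<in>X. K x y * (P x - Q x))"
      unfolding T_def p_def q_def push_def by (simp add: sum_subtractf algebra_simps)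
    also have "\<dots> = (\<Sum>x\<in>X. (P x - Q x) * f x)"
      unfolding f_def by (subst sum.swap) (simp add: sum_distrib_right mult.commute)
    finally show ?thesis .
  qed
  have E: "E \<subseteq> Y" unfolding E_def by auto
  have f01: "0 \<le> f x \<and> f x \<le> 1" if "x \<in> X" for x
  proof -
    have "f x \<le> (\<Sum>y\<in>Y. K x y)" unfolding f_def
      using kf(1,2) E that by (intro sum_mono2) auto
    moreover have "0 \<le> f x" unfolding f_def using kf(2) E that by (intro sum_nonneg) auto
    ultimately show ?thesis using kf(3)[OF that] by simp
  qed
  have Lpos: "L > 0" using L1 by simp
  have W: "f x - f x' \<le> W" if "x \<in> X" "x' \<in> X" for x x'
  proof -
    have "(f x - f x') * L \<le> exp eps - 1"
      using diffbound[OF M fX c NX cN E that] unfolding f_def L_def .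
    hence "f x - f x' \<le> (exp eps - 1) / L" using Lpos by (simp add: le_divide_eq)
    moreover have "f x - f x' \<le> 1" using f01[OF that(1)] f01[OF that(2)] by linarith
    moreover have "L = exp eps * (1 - real N * c) + 1" unfolding L_def by simp
    ultimately show ?thesis unfolding W_def Xi_def by simp
  qed
  have Xne: "X \<noteq> {}" using assms(3) NX by auto
  define m where "m = Min (f ` X)"
  obtain x0 where x0: "x0 \<in> X" "f x0 = m" unfolding m_def using fX Xne
    by (metis (mono_tags, lifting) Min_in finite_imageI image_iff image_is_empty)
  have fm: "m \<le> f x" if "x \<in> X" for x unfolding m_def using fX that by auto
  have sD: "(\<Sum>x\<in>X. P x - Q x) = 0" using Q_facts(2)[OF PQ] Q_facts(2)[OF QQ]
    by (simp add: sum_subtractf)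
  have "T = (\<Sum>x\<in>X. (P x - Q x) * (f x - m))"
  proof -
    have "(\<Sum>x\<in>X. (P x - Q x) * (f x - m)) = T - m * (\<Sum>x\<in>X. P x - Q x)"
    proof -
      have "(\<Sum>x\<in>X. (P x - Q x) * (f x - m)) = (\<Sum>x\<in>X. (P x - Q x) * f x - m * (P x - Q x))"
        by (intro sum.cong refl) (simp add: algebra_simps)
      also have "\<dots> = T - (\<Sum>x\<in>X. m * (P x - Q x))"
        unfolding T2 by (rule sum_subtractf)
      also have "(\<Sum>x\<in>X. m * (P x - Q x)) = m * (\<Sum>x\<in>X. P x - Q x)"
        by (rule sum_distrib_left[symmetric])
      finally show ?thesis .
    qed
    then show ?thesis using sD by simp
  qed
  also have "\<dots> \<le> (\<Sum>x\<in>X. max (P x - Q x) 0 * W)"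
  proof (intro sum_mono)
    fix x assume x: "x \<in> X"
    have a: "0 \<le> f x - m" "f x - m \<le> W" using fm[OF x] W[OF x x0(1)] x0 by auto
    have "(P x - Q x) * (f x - m) \<le> max (P x - Q x) 0 * (f x - m)"
      using a by (intro mult_right_mono) auto
    also have "\<dots> \<le> max (P x - Q x) 0 * W" using a by (intro mult_left_mono) auto
    finally show "(P x - Q x) * (f x - m) \<le> max (P x - Q x) 0 * W" .
  qed
  also have "\<dots> = W * TV X P Q"
    unfolding TV_def using pos_part_sum(1)[OF fX, of P Q] Q_facts(2)[OF PQ] Q_facts(2)[OF QQ]
    by (simp add: sum_distrib_left[symmetric] mult.commute)
  finally have TW: "T \<le> W * TV X P Q" .
  have W0: "W \<ge> 0" unfolding W_def Xi_def using cN assms(6)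
    by (auto intro!: divide_nonneg_pos add_nonneg_pos mult_nonneg_nonneg)
  have lnL: "ln L \<ge> 0" using L1 by simp
  have "KL Y p q \<le> ln L * (W * TV X P Q)" using KLT TW lnL by (meson mult_left_mono order.trans)
  also have "\<dots> \<le> ln L * (W * \<delta>)" using assms(10) W0 lnL by (intro mult_left_mono) auto
  finally show ?thesis unfolding p_def q_def L_def W_def by (simp add: mult.assoc mult.left_commute)
qed

end
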